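(* Let $n,k,m_1,m_2$ be integers with $k\ge1$ and $0\le m_2<m_1\le n-k$, and put $$R_3(\varepsilon)=\frac{n!\,(1+\varepsilon)_{m_1-m_2-1}\,(1-2\varepsilon)_{k+m_2}\,(1-\varepsilon)_{n-m_1-1}}{(1-\varepsilon)_n\,(1-2\varepsilon)_{k-1}\,(1-\varepsilon)_{k+m_1}\,(1+\varepsilon)_{n-k-m_1}}.$$ Then for every integer $H\ge0$ the number $d_n^{H+1}\frac1{H!}\frac{\partial^H}{\partial\varepsilon^H}R_3(\varepsilon)\big|_{\varepsilon=0}$ is an integer.
   Context: $(x)_m=x(x+1)\cdots(x+m-1)$, $(x)_0=1$; $d_n=\operatorname{lcm}(1,\dots,n)$. *)

theory Defs
  imports "HOL-Analysis.Analysis"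
begin

definition dlcm :: "nat \<Rightarrow> nat" where
  "dlcm n = Lcm {1..n}"

definition R3 :: "nat \<Rightarrow> nat \<Rightarrow> nat \<Rightarrow> nat \<Rightarrow> real \<Rightarrow> real" where
  "R3 n k m1 m2 e =
     (fact n * pochhammer (1 + e) (m1 - m2 - 1) * pochhammer (1 - 2*e) (k + m2)
        * pochhammer (1 - e) (n - m1 - 1))
     / (pochhammer (1 - e) n * pochhammer (1 - 2*e) (k - 1)
        * pochhammer (1 - e) (k + m1) * pochhammer (1 + e) (n - k - m1))"

end

theory Submission imports Defs "HOL-Analysis.FPS_Convergence" begin

lemma fps_nth_conv_deriv_real:
  fixes f :: "real fps"
  assumes "fps_conv_radius f > 0"
  shows   "fps_nth f n = (deriv ^^ n) (eval_fps f) 0 / fact n"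
  using assms
proof (induction n arbitrary: f)
  case 0
  thus ?case by (simp add: eval_fps_def)
next
  case (Suc n f)
  have "(deriv ^^ Suc n) (eval_fps f) 0 = (deriv ^^ n) (deriv (eval_fps f)) 0"
    unfolding funpow_Suc_right o_def ..
  also have "eventually (\<lambda>z::real. z \<in> eball 0 (fps_conv_radius f)) (nhds 0)"
    using Suc.prems by (intro eventually_nhds_in_open) (auto simp: zero_ereal_def)
  hence "eventually (\<lambda>z. deriv (eval_fps f) z = eval_fps (fps_deriv f) z) (nhds 0)"
    by eventually_elim (simp add: eval_fps_deriv)
  hence "(deriv ^^ n) (deriv (eval_fps f)) 0 = (deriv ^^ n) (eval_fps (fps_deriv f)) 0"
    by (intro higher_deriv_cong_ev refl)
  also have "\<dots> / fact n = fps_nth (fps_deriv f) n"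
    using Suc.prems fps_conv_radius_deriv[of f] 
    by (intro Suc.IH [symmetric]) auto
  also have "\<dots> / of_nat (Suc n) = fps_nth f (Suc n)"
    by (simp add: fps_deriv_def del: of_nat_Suc)
  finally show ?case by (simp add: field_split_simps)
qed

lemma fps_nth_fps_expansion_real:
  fixes f :: "real \<Rightarrow> real"
  assumes "f has_fps_expansion F"
  shows   "fps_nth F n = (deriv ^^ n) f 0 / fact n"
proof -
  have "fps_nth F n = (deriv ^^ n) (eval_fps F) 0 / fact n"
    using assms by (intro fps_nth_conv_deriv_real) (auto simp: has_fps_expansion_def)
  also have "(deriv ^^ n) (eval_fps F) 0 = (deriv ^^ n) f 0"
    using assms by (intro higher_deriv_cong_ev) (auto simp: has_fps_expansion_def)
  finally show ?thesis .
qed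

lemma inv_lin:
  fixes a :: real
  shows "inverse (1 + fps_const a * fps_X) = Abs_fps (\<lambda>h. (-a)^h)"
proof (rule fps_inverse_unique, rule fps_ext)
  fix h
  show "fps_nth ((1 + fps_const a * fps_X) * Abs_fps (\<lambda>h. (-a)^h)) h = fps_nth (1::real fps) h"
    by (cases h) (simp_all add: algebra_simps mult.assoc fps_X_mult_nth)
qed

definition goodF :: "nat \<Rightarrow> nat \<Rightarrow> real fps \<Rightarrow> bool" where
  "goodF n m F \<longleftrightarrow> (\<forall>h. real (dlcm n) ^ (h + m) * fps_nth F h \<in> \<int>)"

definition GF :: "nat \<Rightarrow> nat \<Rightarrow> (real \<Rightarrow> real) \<Rightarrow> bool" where
  "GF n m f \<longleftrightarrow> (\<exists>F. f has_fps_expansion F \<and> goodF n m F)"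

lemma goodF_mult:
  assumes "goodF n a F" "goodF n b G"
  shows "goodF n (a + b) (F * G)"
  unfolding goodF_def
proof
  fix h
  have "real (dlcm n) ^ (h + (a + b)) * fps_nth (F * G) h =
     (\<Sum>i=0..h. (real (dlcm n) ^ (i + a) * fps_nth F i) * (real (dlcm n) ^ ((h - i) + b) * fps_nth G (h - i)))"
    unfolding fps_mult_nth sum_distrib_left
  proof (rule sum.cong[OF refl])
    fix i assume "i \<in> {0..h}"
    hence hh: "h + (a + b) = (i + a) + ((h - i) + b)" by auto
    have pw: "real (dlcm n) ^ (h + (a + b)) = real (dlcm n) ^ (i + a) * real (dlcm n) ^ ((h - i) + b)"
      unfolding hh by (rule power_add)
    show "real (dlcm n) ^ (h + (a + b)) * (fps_nth F i * fps_nth G (h - i)) =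
      (real (dlcm n) ^ (i + a) * fps_nth F i) * (real (dlcm n) ^ ((h - i) + b) * fps_nth G (h - i))"
      unfolding pw by (simp only: mult_ac)
  qed
  also have "\<dots> \<in> \<int>"
    using assms unfolding goodF_def by (intro Ints_sum) (metis Ints_mult)
  finally show "real (dlcm n) ^ (h + (a + b)) * fps_nth (F * G) h \<in> \<int>" .
qed

lemma goodF_one: "goodF n 0 1"
  unfolding goodF_def by (auto simp: fps_one_nth)

lemma goodF_prod:
  assumes "\<And>i. i \<in> A \<Longrightarrow> goodF n 0 (F i)"
  shows "goodF n 0 (\<Prod>i\<in>A. F i)"
  using assms
proof (induction A rule: infinite_finite_induct)
  case (insert x A)
  then show ?case using goodF_mult[of n 0 "F x" 0] by simp
qed (auto simp: goodF_one)

lemma dvd_div_Int: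
  assumes "1 \<le> j" "j \<le> n"
  shows "real (dlcm n) / real j \<in> \<int>"
proof -
  have "j dvd dlcm n" unfolding dlcm_def using assms by (intro dvd_Lcm) auto
  then obtain q where "dlcm n = j * q" by auto
  hence "real (dlcm n) / real j = real q" using assms by auto
  thus ?thesis by simp
qed

lemma goodF_lin:
  assumes "c \<in> \<int>" "1 \<le> j" "j \<le> n"
  shows "goodF n 0 (1 + fps_const (c / real j) * fps_X)"
  unfolding goodF_def
proof
  fix h
  show "real (dlcm n) ^ (h + 0) * fps_nth (1 + fps_const (c / real j) * fps_X) h \<in> \<int>"
  proof (cases h)
    case 0 thus ?thesis by simp
  next
    case (Suc h')
    have "real (dlcm n) / real j * c \<in> \<int>" using dvd_div_Int[OF assms(2,3)] assms(1) by (rule Ints_mult)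
    thus ?thesis using Suc by (cases h') (auto simp: fps_X_mult_nth)
  qed
qed

lemma goodF_invlin:
  assumes "c \<in> \<int>" "1 \<le> j" "j \<le> n"
  shows "goodF n 0 (inverse (1 + fps_const (c / real j) * fps_X))"
  unfolding goodF_def inv_lin
proof
  fix h
  have "real (dlcm n) / real j * c \<in> \<int>" using dvd_div_Int[OF assms(2,3)] assms(1) by (rule Ints_mult)
  hence "- (real (dlcm n) / real j * c) \<in> \<int>" by (rule Ints_minus)
  hence "(- (real (dlcm n) / real j * c)) ^ h \<in> \<int>" by auto
  also have "(- (real (dlcm n) / real j * c)) ^ h = real (dlcm n) ^ h * (- (c / real j)) ^ h"
    by (simp add: power_mult_distrib[symmetric] field_simps)
  finally show "real (dlcm n) ^ (h + 0) * fps_nth (Abs_fps (\<lambda>h. (- (c / real j)) ^ h)) h \<in> \<int>" by simp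
qed

lemma exp_lin: "(\<lambda>x::real. 1 + a * x) has_fps_expansion (1 + fps_const a * fps_X)"
proof -
  have "(\<lambda>x::real. a * x) has_fps_expansion fps_const a * fps_X"
    by (intro has_fps_expansion_cmult_left has_fps_expansion_fps_X)
  thus ?thesis by (intro has_fps_expansion_add has_fps_expansion_1)
qed

lemma exp_invlin: "(\<lambda>x::real. inverse (1 + a * x)) has_fps_expansion inverse (1 + fps_const a * fps_X)"
  by (intro has_fps_expansion_inverse exp_lin) simp

definition Qf :: "real \<Rightarrow> nat \<Rightarrow> real \<Rightarrow> real" where
  "Qf c m x = (\<Prod>i<m. 1 + c / real (Suc i) * x)"

definition iQf :: "real \<Rightarrow> nat \<Rightarrow> real \<Rightarrow> real" where
  "iQf c m x = (\<Prod>i<m. inverse (1 + c / real (Suc i) * x))"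

lemma GF_Qf:
  assumes "c \<in> \<int>" "m \<le> n"
  shows "GF n 0 (Qf c m)"
  unfolding GF_def Qf_def[abs_def]
proof (intro exI conjI)
  show "(\<lambda>x. \<Prod>i<m. 1 + c / real (Suc i) * x) has_fps_expansion (\<Prod>i<m. 1 + fps_const (c / real (Suc i)) * fps_X)"
    by (intro has_fps_expansion_prod exp_lin)
  show "goodF n 0 (\<Prod>i<m. 1 + fps_const (c / real (Suc i)) * fps_X)"
    using assms by (intro goodF_prod goodF_lin) auto
qed

lemma GF_iQf:
  assumes "c \<in> \<int>" "m \<le> n"
  shows "GF n 0 (iQf c m)"
  unfolding GF_def iQf_def[abs_def]
proof (intro exI conjI)
  show "(\<lambda>x. \<Prod>i<m. inverse (1 + c / real (Suc i) * x)) has_fps_expansion (\<Prod>i<m. inverse (1 + fps_const (c / real (Suc i)) * fps_X))"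
    by (intro has_fps_expansion_prod exp_invlin)
  show "goodF n 0 (\<Prod>i<m. inverse (1 + fps_const (c / real (Suc i)) * fps_X))"
    using assms by (intro goodF_prod goodF_invlin) auto
qed

lemma GF_mult0:
  assumes "GF n m f" "GF n 0 g"
  shows "GF n m (\<lambda>x. f x * g x)"
proof -
  obtain F G where "f has_fps_expansion F" "goodF n m F" "g has_fps_expansion G" "goodF n 0 G"
    using assms unfolding GF_def by blast
  thus ?thesis unfolding GF_def using goodF_mult[of n m F 0 G]
    by (intro exI[of _ "F * G"]) (auto intro: has_fps_expansion_mult)
qed

lemma GF_const:
  assumes "real (dlcm n) * C \<in> \<int>"
  shows "GF n 1 (\<lambda>x. C)"
  unfolding GF_def goodF_def
  by (intro exI[of _ "fps_const C"]) (use assms in auto)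

lemma poch_Qf:
  fixes x c :: real
  shows "pochhammer (1 + c * x) m = fact m * Qf c m x"
proof -
  have "pochhammer (1 + c * x) m = (\<Prod>i<m. 1 + c * x + real i)"
    by (simp add: pochhammer_prod lessThan_atLeast0)
  also have "\<dots> = (\<Prod>i<m. real (Suc i) * (1 + c / real (Suc i) * x))"
    by (intro prod.cong refl) (simp add: field_simps)
  also have "\<dots> = fact m * Qf c m x"
    by (simp add: prod.distrib Qf_def fact_prod_Suc lessThan_atLeast0)
  finally show ?thesis .
qed

lemma iQf_inv: "iQf c m x = inverse (Qf c m x)"
  unfolding iQf_def Qf_def by (simp add: prod_inversef[symmetric] o_def)

lemma B_int:
  assumes "a + r + 1 \<le> n"
  shows "real (dlcm n) * (fact a * fact r / fact (a + r + 1)) \<in> \<int>"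
  using assms
proof (induction r arbitrary: a)
  case 0
  thus ?case using dvd_div_Int[of "a+1" n] by (simp add: fact_Suc)
next
  case (Suc r)
  have gen: "A * ((real r + 1) * R) / ((real (a + r + 1) + 1) * F) =
        A * R / F - ((real a + 1) * A) * R / ((real (a + r + 1) + 1) * F)"
    if "F > 0" for A R F :: real
  proof -
    have D: "real (a + r + 1) + 1 > 0" by simp
    define D where "D = real (a + r + 1) + 1"
    have "D = real r + 1 + (real a + 1)" unfolding D_def by simp
    hence "A * ((real r + 1) * R) = A * R * D - ((real a + 1) * A) * R" by (simp add: algebra_simps)
    hence "A * ((real r + 1) * R) / (D * F) = A * R * D / (D * F) - ((real a + 1) * A) * R / (D * F)"
      by (simp add: diff_divide_distrib)
    also have "A * R * D / (D * F) = A * R / F" using D unfolding D_def by simp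
    finally show ?thesis unfolding D_def .
  qed
  have f1: "(fact (a + Suc r + 1) :: real) = (real (a + r + 1) + 1) * fact (a + r + 1)"
  proof -
    have "a + Suc r + 1 = Suc (a + r + 1)" by simp
    thus ?thesis by (simp only: fact_Suc of_nat_Suc) simp
  qed
  have f2: "(fact (Suc a + r + 1) :: real) = (real (a + r + 1) + 1) * fact (a + r + 1)"
  proof -
    have "Suc a + r + 1 = Suc (a + r + 1)" by simp
    thus ?thesis by (simp only: fact_Suc of_nat_Suc) simp
  qed
  have e: "(fact a * fact (Suc r) / fact (a + Suc r + 1) :: real) =
        fact a * fact r / fact (a + r + 1) - fact (Suc a) * fact r / fact (Suc a + r + 1)"
    unfolding f1 f2 fact_Suc[of a] fact_Suc[of r] of_nat_Suc
    using gen[of "fact (a + r + 1)" "fact a" "fact r"] by (simp add: add.commute)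
  have "real (dlcm n) * (fact a * fact r / fact (a + r + 1)) \<in> \<int>" using Suc by auto
  moreover have "real (dlcm n) * (fact (Suc a) * fact r / fact (Suc a + r + 1)) \<in> \<int>"
    using Suc.prems by (intro Suc.IH) auto
  ultimately show ?case unfolding e by (simp add: right_diff_distrib Ints_diff)
qed


theorem mainTheorem17:
  fixes n k m1 m2 H :: nat
  assumes "k \<ge> 1" and "m2 < m1" and "m1 \<le> n - k" and "k \<le> n"
  shows "real (dlcm n) ^ (H + 1) * ((deriv ^^ H) (R3 n k m1 m2) 0 / fact H) \<in> \<int>"
proof -
  define a where "a = m1 - m2 - 1"
  define r where "r = k + m2"
  define Cst :: real where "Cst = fact n * fact a * fact r * fact (n - m1 - 1) /
      (fact n * fact (k - 1) * fact (k + m1) * fact (n - k - m1))"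
  have R3eq: "R3 n k m1 m2 = (\<lambda>e. Cst * Qf 1 a e * Qf (-2) r e * Qf (-1) (n - m1 - 1) e
      * iQf (-1) n e * iQf (-2) (k - 1) e * iQf (-1) (k + m1) e * iQf 1 (n - k - m1) e)"
  proof
    fix e :: real
    have p1: "1 + e = 1 + 1 * e" and p2: "1 - 2 * e = 1 + (-2) * e" and p3: "1 - e = 1 + (-1) * e"
      by simp_all
    show "R3 n k m1 m2 e = Cst * Qf 1 a e * Qf (-2) r e * Qf (-1) (n - m1 - 1) e
      * iQf (-1) n e * iQf (-2) (k - 1) e * iQf (-1) (k + m1) e * iQf 1 (n - k - m1) e"
      unfolding R3_def p1 p2 p3 poch_Qf iQf_inv Cst_def a_def r_def
      by (simp add: divide_inverse mult_ac)
  qed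
  have ar: "a + r + 1 = k + m1" unfolding a_def r_def using assms by auto
  have Cst_eq: "Cst = real ((n - m1 - 1) choose (k - 1)) * (fact a * fact r / fact (a + r + 1))"
  proof -
    have kk: "k - 1 \<le> n - m1 - 1" and kk2: "n - m1 - 1 - (k - 1) = n - k - m1" using assms by auto
    have "real ((n - m1 - 1) choose (k - 1)) = fact (n - m1 - 1) / (fact (k - 1) * fact (n - k - m1))"
      using binomial_fact[OF kk] unfolding kk2 by simp
    thus ?thesis unfolding Cst_def ar by (simp add: field_simps)
  qed
  have "real (dlcm n) * Cst = real ((n - m1 - 1) choose (k - 1)) * (real (dlcm n) * (fact a * fact r / fact (a + r + 1)))"
    unfolding Cst_eq by simp
  also have "\<dots> \<in> \<int>"
    using ar assms by (intro Ints_mult B_int) auto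
  finally have CI: "real (dlcm n) * Cst \<in> \<int>" .
  have le: "a \<le> n" "r \<le> n" "n - m1 - 1 \<le> n" "k - 1 \<le> n" "k + m1 \<le> n" "n - k - m1 \<le> n"
    unfolding a_def r_def using assms by auto
  have "GF n 1 (R3 n k m1 m2)"
    unfolding R3eq
    by (intro GF_mult0 GF_const[OF CI] GF_Qf GF_iQf le order.refl) auto
  then obtain F where F: "R3 n k m1 m2 has_fps_expansion F" "goodF n 1 F"
    unfolding GF_def by blast
  have "(deriv ^^ H) (R3 n k m1 m2) 0 / fact H = fps_nth F H"
    using fps_nth_fps_expansion_real[OF F(1)] by simp
  thus ?thesis using F(2) unfolding goodF_def by simp
qed

end
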